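(* Let $m\ge5$ be odd, $h=\frac{m-1}{2}$, $A=\{1,2,\dots,2^{h-1}-1\}$. For any $i\in A$ and $j\in\Gamma_{(h)}$: (i) $C_{i+2^h}\cap C_{j+2^{h+1}}\neq\emptyset$ only if $(i,j)=(1,1)$; moreover $C_j\cap C_{j+2^{h+1}}=\emptyset$. (ii) $$C_{i+2^h}\cap C_j=\begin{cases}C_j,&\text{if }(i,j)=(2^s i_1,\ i_1+2^{h-s})\text{ for some } i_1\in\Gamma_{(h-1-s)}\text{ and } s\in\{1,2,\dots,h-2\},\\ \emptyset,&\text{otherwise.}\end{cases}$$
   Context: Let $v=2^m-1$. For an integer $i$, $C_i=\{i\cdot 2^s \bmod v: s\ge 0\}$ is the $2$-cyclotomic coset of $i$ modulo $v$. For a positive integer $t$, $\Gamma_{(t)}=\{j:1\le j\le 2^t-1,\ j\text{ odd}\}$. *)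

theory Defs
  imports Main
begin

definition cyc_coset :: "nat \<Rightarrow> nat \<Rightarrow> nat set" where
  "cyc_coset m i = {(i * 2 ^ s) mod (2 ^ m - 1) | s. True}"

definition Gamma :: "nat \<Rightarrow> nat set" where
  "Gamma t = {j. 1 \<le> j \<and> j \<le> 2 ^ t - 1 \<and> odd j}"

end

theory Submission
  imports Defs
begin

lemma pow_m_mod:
  assumes "m \<ge> 2" shows "(2::nat)^m mod (2^m - 1) = 1"
proof -
  have "(2::nat)^m \<ge> 2^2" using assms by (intro power_increasing) auto
  hence "(2::nat)^m = (2^m - 1) + 1" "(2::nat)^m - 1 > 1" by auto
  thus ?thesis by (metis mod_add_self1 mod_less)
qed

lemma shift_mod:
  assumes "m \<ge> 2"
  shows "x * 2^n mod (2^m-1) = x * 2^(n mod m) mod (2^m - (1::nat))"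
proof -
  define v :: nat where "v = 2^m - 1"
  have p: "((2::nat)^m)^q mod v = 1" for q
  proof -
    have "((2::nat)^m)^q mod v = (2^m mod v)^q mod v" by (simp add: power_mod)
    also have "\<dots> = 1" using pow_m_mod[OF assms] v_def
      by (metis One_nat_def \<open>((2::nat)^m)^q mod v = (2^m mod v)^q mod v\<close> mod_mod_trivial power_one)
    finally show ?thesis .
  qed
  have "(2::nat)^n = 2^(n mod m) * (2^m)^(n div m)"
    by (metis mod_mult_div_eq power_add power_mult add.commute mult.commute)
  hence "x * 2^n mod v = ((x * 2^(n mod m)) * (2^m)^(n div m)) mod v" by (simp add: mult.assoc)
  also have "\<dots> = ((x * 2^(n mod m)) mod v * (((2::nat)^m)^(n div m) mod v)) mod v"
    by (simp add: mod_mult_eq)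
  also have "\<dots> = x * 2^(n mod m) mod v" using p by simp
  finally show ?thesis using v_def by simp
qed

lemma in_coset_trans:
  assumes "y \<in> cyc_coset m x" "z \<in> cyc_coset m y"
  shows "z \<in> cyc_coset m x"
proof -
  obtain s where s: "y = x * 2^s mod (2^m-1)" using assms(1) unfolding cyc_coset_def by auto
  obtain t where t: "z = y * 2^t mod (2^m-1)" using assms(2) unfolding cyc_coset_def by auto
  have "z = x * 2^(s+t) mod (2^m-1)" using s t
    by (simp add: mod_mult_left_eq power_add mult.assoc)
  thus ?thesis unfolding cyc_coset_def by auto
qed

lemma self_in_coset:
  assumes "y < 2^m - 1" shows "y \<in> cyc_coset m y"
  unfolding cyc_coset_def using assms by (auto intro!: exI[of _ 0])

lemma inter_in_coset:
  assumes "m \<ge> 2" "z \<in> cyc_coset m x" "z \<in> cyc_coset m y" "y < 2^m - 1"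
  shows "y \<in> cyc_coset m x"
proof -
  define v :: nat where "v = 2^m - 1"
  obtain s where s: "z = x * 2^s mod v" using assms(2) unfolding cyc_coset_def v_def by auto
  obtain t where t: "z = y * 2^t mod v" using assms(3) unfolding cyc_coset_def v_def by auto
  define u where "u = m * t - t"
  have "t \<le> m * t" using assms(1) by simp
  hence tu: "t + u = t * m" unfolding u_def by (simp add: mult.commute)
  have "z * 2^u mod v = y * 2^t * 2^u mod v" using t by (simp add: mod_mult_left_eq)
  also have "\<dots> = y * 2^(t*m) mod v" using tu by (metis power_add mult.assoc)
  also have "\<dots> = y * 2^((t*m) mod m) mod v" unfolding v_def by (rule shift_mod[OF assms(1)])
  also have "\<dots> = y" using assms(4) v_def by simp
  finally have "y = x * 2^(s+u) mod v" using s
    by (simp add: mod_mult_left_eq power_add mult.assoc)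
  thus ?thesis unfolding cyc_coset_def v_def by auto
qed

lemma coset_eq:
  assumes "m \<ge> 2" "y \<in> cyc_coset m x" "x < 2^m - 1" "y < 2^m - 1"
  shows "cyc_coset m y = cyc_coset m x"
proof -
  have "x \<in> cyc_coset m y"
    using inter_in_coset[OF assms(1) self_in_coset[OF assms(4)] assms(2) assms(3)] .
  thus ?thesis using assms in_coset_trans by blast
qed

lemma rot_form:
  assumes "m \<ge> 2" "y \<in> cyc_coset m x" "x < 2^m - 1" "0 < y"
  shows "\<exists>s<m. y mod 2^s = x div 2^(m-s) \<and> y div 2^s = x mod 2^(m-s)"
proof -
  define v :: nat where "v = 2^m - 1"
  obtain n where n: "y = x * 2^n mod v" using assms(2) unfolding cyc_coset_def v_def by auto
  define s where "s = n mod m"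
  have sm: "s < m" using assms(1) s_def by simp
  have y: "y = x * 2^s mod v" using n shift_mod[OF assms(1)] s_def v_def by simp
  define k where "k = m - s"
  have mk: "m = k + s" using sm k_def by simp
  define R where "R = (x mod 2^k) * 2^s + x div 2^k"
  have km: "(2::nat)^k * 2^s = 2^m" using mk by (simp add: power_add)
  have "x * 2^s = ((x div 2^k) * 2^k + x mod 2^k) * 2^s" by (simp only: div_mult_mod_eq)
  also have "\<dots> = (x div 2^k) * (2^k * 2^s) + (x mod 2^k) * 2^s" by (simp only: add_mult_distrib mult.assoc)
  finally have xs: "x * 2^s = (x div 2^k) * 2^m + (x mod 2^k) * 2^s" using km by simp
  have "((x div 2^k) * 2^m + (x mod 2^k) * 2^s) mod v = ((x div 2^k) * 2^m mod v + (x mod 2^k) * 2^s) mod v"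
    by (simp add: mod_add_left_eq)
  also have "(x div 2^k) * 2^m mod v = (x div 2^k) * (2^m mod v) mod v"
    by (simp add: mod_mult_right_eq)
  finally have "x * 2^s mod v = ((x div 2^k) * (2^m mod v) + (x mod 2^k) * 2^s) mod v"
    using xs by (simp add: mod_add_left_eq)
  hence ym: "y = R mod v" using y pow_m_mod[OF assms(1)] v_def R_def by (simp add: add.commute)
  have xl: "x < 2^k * 2^s" using assms(3) mk by (simp add: power_add)
  have d: "x div 2^k < 2^s" using xl by (simp add: div_less_iff_less_mult mult.commute)
  have "x mod 2^k < 2^k" by simp
  hence "x mod 2^k \<le> 2^k - 1" by linarith
  hence "(x mod 2^k) * 2^s \<le> (2^k - 1) * 2^s" by simp
  hence r1: "(x mod 2^k) * 2^s \<le> 2^k * 2^s - 2^s" by (simp add: diff_mult_distrib)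
  have "(2::nat)^s \<le> 2^k * 2^s" by simp
  hence "R < 2^k * 2^s" using d R_def r1 by linarith
  hence "R \<le> v" using km v_def by linarith
  moreover have "R \<noteq> v" using ym assms(4) by auto
  ultimately have yR: "y = R" using ym by simp
  have "y mod 2^s = x div 2^k" using yR d R_def by simp
  moreover have "y div 2^s = x mod 2^k" using yR d R_def by simp
  ultimately show ?thesis using sm k_def by auto
qed


lemma caseA:
  assumes h2: "h \<ge> 2" and m: "m = 2*h+1" and i: "1 \<le> i" "i < 2^(h-1)"
    and j: "odd j" "j < 2^h" and s: "s < m"
    and e1: "(j + 2^(h+1)) mod 2^s = (i + 2^h) div 2^(m-s)"
    and e2: "(j + 2^(h+1)) div 2^s = (i + 2^h) mod 2^(m-s)"
  shows "i = 1 \<and> j = (1::nat)"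
proof -
  have "(2::nat)^(h-1) \<le> 2^h" by (intro power_increasing) auto
  hence ih: "i < 2^h" using i(2) by linarith
  have a_lt: "i + 2^h < 2^(h+1)" using ih by simp
  have b_lt: "j + 2^(h+1) < 2^(h+2)" using j(2) by simp
  have bodd: "odd (j + 2^(h+1))" using j(1) by simp
  consider "s = 0" | "1 \<le> s" "s \<le> h" | "s = h+1" | "h+2 \<le> s" by linarith
  then show ?thesis
  proof cases
    case 1
    have "(2::nat)^(h+1) \<le> 2^m" using m by (intro power_increasing) auto
    hence "(i+2^h) mod 2^m = i + 2^h" using a_lt by simp
    then show ?thesis using e2 1 a_lt by simp
  next
    case 2
    have "(2::nat)^(h+1) \<le> 2^(m-s)" using m 2 by (intro power_increasing) auto
    hence "(i+2^h) div 2^(m-s) = 0" using a_lt by simp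
    hence "2^s dvd (j + 2^(h+1))" using e1 by (simp add: mod_eq_0_iff_dvd)
    moreover have "(2::nat) dvd 2^s" using 2 by simp
    ultimately have "2 dvd (j + 2^(h+1))" by (meson dvd_trans)
    then show ?thesis using bodd by simp
  next
    case 3
    have k: "m - s = h" using 3 m by simp
    have "(i + 2^h) div 2^h = i div 2^h + 1" by (simp add: div_add_self2)
    hence q1: "(i + 2^h) div 2^h = 1" using ih by simp
    have q2: "(i + 2^h) mod 2^h = i" using ih by simp
    have "(j + 2^(h+1)) div 2^(h+1) = j div 2^(h+1) + 1" by (simp only: div_add_self2 power_not_zero zero_neq_numeral not_False_eq_True)
    moreover have "j < 2^(h+1)" using j(2) by simp
    ultimately have q3: "(j + 2^(h+1)) div 2^(h+1) = (1::nat)" by simp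
    have q4: "(j + 2^(h+1)) mod 2^(h+1) = j" using j(2) by simp
    show ?thesis using e1 e2 k 3 q1 q2 q3 q4 by simp
  next
    case 4
    have "(2::nat)^(h+2) \<le> 2^s" using 4 by (intro power_increasing) auto
    hence "(j + 2^(h+1)) mod 2^s = j + 2^(h+1)" using b_lt by simp
    hence "j + 2^(h+1) = (i + 2^h) div 2^(m-s)" using e1 by simp
    moreover have "(i + 2^h) div 2^(m-s) \<le> i + 2^h" by simp
    ultimately have "j + 2^(h+1) \<le> i + 2^h" by linarith
    moreover have "(2::nat)^(h+1) \<le> j + 2^(h+1)" by simp
    ultimately show ?thesis using a_lt by linarith
  qed
qed

lemma caseB:
  assumes h2: "h \<ge> 2" and m: "m = 2*h+1"
    and j: "odd j" "j < (2::nat)^h" and s: "s < m"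
    and e1: "j mod 2^s = (j + 2^(h+1)) div 2^(m-s)"
    and e2: "j div 2^s = (j + 2^(h+1)) mod 2^(m-(s::nat))"
  shows False
proof -
  have b_lt: "j + 2^(h+1) < 2^(h+2)" using j(2) by simp
  have bodd: "odd (j + 2^(h+1))" using j(1) by simp
  have hm: "(2::nat)^(h+2) \<le> 2^m" using m h2 by (intro power_increasing) auto
  show False
  proof (cases "s = 0")
    case True
    have "(j + 2^(h+1)) mod 2^m = j + 2^(h+1)" using b_lt hm by simp
    then show False using e2 True by simp
  next
    case False
    have "(2::nat) dvd 2^s" using False by simp
    hence "j mod 2^s mod 2 = j mod 2" by (simp add: mod_mod_cancel)
    hence "j mod 2^s \<noteq> 0" using j(1) by (metis mod_0 odd_iff_mod_2_eq_one zero_neq_one)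
    hence "(j + 2^(h+1)) div 2^(m-s) \<noteq> 0" using e1 by simp
    hence "2^(m-s) \<le> j + 2^(h+1)" by (simp add: div_eq_0_iff not_less)
    hence "(2::nat)^(m-s) < 2^(h+2)" using b_lt by linarith
    hence "m - s < h + 2" using power_less_imp_less_exp by (metis one_less_numeral_iff semiring_norm(76))
    hence "h \<le> s" using m by linarith
    hence "(2::nat)^h \<le> 2^s" by (intro power_increasing) auto
    hence "j < 2^s" using j(2) by linarith
    hence "j div 2^s = 0" by simp
    hence "2^(m-s) dvd (j + 2^(h+1))" using e2 by (simp add: mod_eq_0_iff_dvd)
    moreover have "(2::nat) dvd 2^(m-s)" using s by simp
    ultimately have "2 dvd (j + 2^(h+1))" by (meson dvd_trans)
    then show False using bodd by simp
  qed
qed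

lemma caseC:
  assumes h2: "h \<ge> 2" and m: "m = 2*h+1" and i: "1 \<le> i" "i < 2^(h-1)"
    and j: "odd j" "j < 2^h" and s: "s < m"
    and e1: "j mod 2^s = (i + 2^h) div 2^(m-s)"
    and e2: "j div 2^s = (i + 2^h) mod 2^(m-s)"
  shows "\<exists>s'\<in>{1..h-2}. \<exists>i1\<in>Gamma (h-1-s'). i = 2^s' * i1 \<and> j = i1 + (2::nat)^(h-s')"
proof -
  have "(2::nat)^(h-1) \<le> 2^h" by (intro power_increasing) auto
  hence ih: "i < 2^h" using i(2) by linarith
  have a_lt: "i + 2^h < 2^(h+1)" using ih by simp
  consider "s = 0" | "1 \<le> s" "s \<le> h" | "h+1 \<le> s" by linarith
  then show ?thesis
  proof cases
    case 1
    have "(2::nat)^(h+1) \<le> 2^m" using m by (intro power_increasing) auto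
    hence "(i+2^h) mod 2^m = i + 2^h" using a_lt by simp
    then show ?thesis using e2 1 j(2) by simp
  next
    case 2
    have "(2::nat)^(h+1) \<le> 2^(m-s)" using m 2 by (intro power_increasing) auto
    hence "(i+2^h) div 2^(m-s) = 0" using a_lt by simp
    hence "2^s dvd j" using e1 by (simp add: mod_eq_0_iff_dvd)
    moreover have "(2::nat) dvd 2^s" using 2 by simp
    ultimately have "2 dvd j" by (meson dvd_trans)
    then show ?thesis using j by simp
  next
    case 3
    define k where "k = m - s"
    have k1: "1 \<le> k" "k \<le> h" using 3 s m k_def by auto
    have "(2::nat)^h \<le> 2^s" using 3 by (intro power_increasing) auto
    hence "j < 2^s" using j(2) by linarith
    hence "j div 2^s = 0" "j mod 2^s = j" by auto
    hence a0: "(i + 2^h) mod 2^k = 0" and jd: "j = (i + 2^h) div 2^k" using e1 e2 k_def by auto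
    have hk: "(2::nat)^h = 2^k * 2^(h-k)" using k1 by (simp flip: power_add)
    have "2^k dvd (i + 2^h)" using a0 by (simp add: mod_eq_0_iff_dvd)
    hence "2^k dvd i" using hk by (metis dvd_add_left_iff dvd_triv_left)
    then obtain i1 where i1: "i = 2^k * i1" by blast
    have "i + 2^h = 2^k * (i1 + 2^(h-k))" using i1 hk by (simp add: algebra_simps)
    hence jj: "j = i1 + 2^(h-k)" using jd by simp
    have "k \<noteq> h"
    proof
      assume "k = h"
      hence "2^h * i1 < 2^h * 1" using i1 ih by simp
      hence "i1 = 0" by simp
      thus False using i1 i(1) by simp
    qed
    hence "h - k \<ge> 1" using k1 by simp
    hence "even ((2::nat)^(h-k))" by simp
    hence oi: "odd i1" using jj j(1) by simp
    hence i1p: "i1 \<ge> 1" by (cases i1) auto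
    have "(2::nat)^(h-1) = 2^k * 2^(h-1-k)" using k1 \<open>k \<noteq> h\<close> by (simp flip: power_add)
    hence "2^k * i1 < 2^k * 2^(h-1-k)" using i1 i(2) by simp
    hence il: "i1 < 2^(h-1-k)" by simp
    hence "(1::nat) < 2^(h-1-k)" using i1p by linarith
    hence "h - 1 - k \<noteq> 0" by (metis power_0 less_irrefl)
    hence "k \<le> h - 2" by linarith
    moreover have "i1 \<in> Gamma (h-1-k)" unfolding Gamma_def using oi i1p il by auto
    ultimately show ?thesis using i1 jj k1 by auto
  qed
qed


theorem lemma10:
  fixes m h :: nat
  assumes "m \<ge> 5" and "odd m" and "h = (m - 1) div 2"
  shows "\<forall>i \<in> {1..2 ^ (h - 1) - 1}. \<forall>j \<in> Gamma h.
     (cyc_coset m (i + 2 ^ h) \<inter> cyc_coset m (j + 2 ^ (h + 1)) \<noteq> {} \<longrightarrow> (i, j) = (1, 1))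
   \<and> cyc_coset m j \<inter> cyc_coset m (j + 2 ^ (h + 1)) = {}
   \<and> cyc_coset m (i + 2 ^ h) \<inter> cyc_coset m j =
       (if \<exists>s \<in> {1..h - 2}. \<exists>i1 \<in> Gamma (h - 1 - s). i = 2 ^ s * i1 \<and> j = i1 + 2 ^ (h - s)
        then cyc_coset m j else {})"
proof (intro ballI)
  fix i j :: nat assume iA: "i \<in> {1..2 ^ (h - 1) - 1}" and jG: "j \<in> Gamma h"
  have m: "m = 2*h+1" using assms(2,3) by (auto elim!: oddE)
  have h2: "h \<ge> 2" using m assms(1) by linarith
  have m2: "m \<ge> 2" using assms(1) by linarith
  have "(0::nat) < 2^(h-1)" by simp
  hence i: "1 \<le> i" "i < 2^(h-1)" using iA by auto
  have "(0::nat) < 2^h" by simp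
  hence j: "odd j" "j < 2^h" "1 \<le> j" using jG unfolding Gamma_def by auto
  have "(2::nat)^(h-1) \<le> 2^h" by (intro power_increasing) auto
  hence ih: "i < 2^h" using i(2) by linarith
  have hm: "(2::nat)^(h+2) \<le> 2^m" using m h2 by (intro power_increasing) auto
  have "j + 2^(h+1) + 1 \<le> 2^h + 2^(h+1)" using j(2) by linarith
  moreover have "(2::nat)^h + 2^(h+1) < 2^(h+2)" by simp
  ultimately have bv: "j + 2^(h+1) < 2^m - 1" using hm by linarith
  have "(2::nat)^(h+1) = 2 * 2^h" by simp
  hence av: "i + 2^h < 2^m - 1" using bv ih by linarith
  have jv: "j < 2^m - 1" using bv by linarith
  define cond where "cond = (\<exists>s \<in> {1..h - 2}. \<exists>i1 \<in> Gamma (h - 1 - s). i = 2 ^ s * i1 \<and> j = i1 + 2 ^ (h - s))"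
  have P1: "cyc_coset m (i + 2 ^ h) \<inter> cyc_coset m (j + 2 ^ (h + 1)) \<noteq> {} \<longrightarrow> (i, j) = (1, 1)"
  proof
    assume "cyc_coset m (i + 2 ^ h) \<inter> cyc_coset m (j + 2 ^ (h + 1)) \<noteq> {}"
    then obtain z where z1: "z \<in> cyc_coset m (i + 2 ^ h)" and z2: "z \<in> cyc_coset m (j + 2 ^ (h + 1))" by blast
    have mem: "j + 2^(h+1) \<in> cyc_coset m (i + 2^h)" by (rule inter_in_coset[OF m2 z1 z2 bv])
    have "0 < j + 2^(h+1)" by simp
    from rot_form[OF m2 mem av this] obtain s where "s < m" "(j + 2^(h+1)) mod 2^s = (i + 2^h) div 2^(m-s)"
      "(j + 2^(h+1)) div 2^s = (i + 2^h) mod 2^(m-s)" by blast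
    thus "(i, j) = (1, 1)" using caseA[OF h2 m i j(1) j(2)] by auto
  qed
  have P2: "cyc_coset m j \<inter> cyc_coset m (j + 2 ^ (h + 1)) = {}"
  proof (rule ccontr)
    assume "cyc_coset m j \<inter> cyc_coset m (j + 2 ^ (h + 1)) \<noteq> {}"
    then obtain z where z1: "z \<in> cyc_coset m j" and z2: "z \<in> cyc_coset m (j + 2 ^ (h + 1))" by blast
    have mem: "j \<in> cyc_coset m (j + 2^(h+1))" by (rule inter_in_coset[OF m2 z2 z1 jv])
    have "0 < j" using j(3) by simp
    from rot_form[OF m2 mem bv this] obtain s where "s < m" "j mod 2^s = (j + 2^(h+1)) div 2^(m-s)"
      "j div 2^s = (j + 2^(h+1)) mod 2^(m-s)" by blast
    thus False using caseB[OF h2 m j(1) j(2)] by auto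
  qed
  have P3: "cyc_coset m (i + 2 ^ h) \<inter> cyc_coset m j = (if cond then cyc_coset m j else {})"
  proof (cases cond)
    case True
    then obtain s i1 where s: "s \<in> {1..h-2}" and ij: "i = 2 ^ s * i1" "j = i1 + 2 ^ (h - s)"
      unfolding cond_def by blast
    have hs: "h = s + (h - s)" using s h2 by auto
    have "(2::nat)^h = 2^s * 2^(h-s)" by (metis hs power_add)
    hence a: "i + 2^h = 2^s * j" using ij by (simp add: algebra_simps)
    have ms: "m = s + (m - s)" using s m by auto
    have "(2::nat)^s * 2^(m-s) = 2^m" by (metis ms power_add)
    hence "(i + 2^h) * 2^(m-s) = j * 2^m" using a by (metis mult.commute mult.left_commute)
    hence "(i + 2^h) * 2^(m-s) mod (2^m-1) = j * 2^(m mod m) mod (2^m - 1)"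
      using shift_mod[OF m2, of j m] by simp
    also have "\<dots> = j" using jv by simp
    finally have "j \<in> cyc_coset m (i + 2^h)" unfolding cyc_coset_def by (metis (mono_tags, lifting) mem_Collect_eq)
    hence "cyc_coset m j = cyc_coset m (i + 2^h)" by (rule coset_eq[OF m2 _ av jv])
    thus ?thesis using True by auto
  next
    case False
    have "cyc_coset m (i + 2 ^ h) \<inter> cyc_coset m j = {}"
    proof (rule ccontr)
      assume "cyc_coset m (i + 2 ^ h) \<inter> cyc_coset m j \<noteq> {}"
      then obtain z where z1: "z \<in> cyc_coset m (i + 2 ^ h)" and z2: "z \<in> cyc_coset m j" by blast
      have mem: "j \<in> cyc_coset m (i + 2^h)" by (rule inter_in_coset[OF m2 z1 z2 jv])
      have "0 < j" using j(3) by simp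
      from rot_form[OF m2 mem av this] obtain s where "s < m" "j mod 2^s = (i + 2^h) div 2^(m-s)"
        "j div 2^s = (i + 2^h) mod 2^(m-s)" by blast
      hence cond using caseC[OF h2 m i j(1) j(2)] unfolding cond_def by blast
      thus False using False by simp
    qed
    thus ?thesis using False by simp
  qed
  show "(cyc_coset m (i + 2 ^ h) \<inter> cyc_coset m (j + 2 ^ (h + 1)) \<noteq> {} \<longrightarrow> (i, j) = (1, 1))
   \<and> cyc_coset m j \<inter> cyc_coset m (j + 2 ^ (h + 1)) = {}
   \<and> cyc_coset m (i + 2 ^ h) \<inter> cyc_coset m j =
       (if \<exists>s \<in> {1..h - 2}. \<exists>i1 \<in> Gamma (h - 1 - s). i = 2 ^ s * i1 \<and> j = i1 + 2 ^ (h - s)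
        then cyc_coset m j else {})"
    using P1 P2 P3 unfolding cond_def by blast
qed

end
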